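(* Let $L$ be a distributive lattice with generated Boolean algebra $B$, $n\ge1$, $a_i,b_i\in L$ with $a_i<b_i$ for $i\in[n]$, $\widehat{\mathbf e}_I\in L^n$ ($I\subseteq[n]$) the tuple with $i$-th component $b_i$ if $i\in I$ and $a_i$ otherwise, $D=\{\widehat{\mathbf e}_I:I\subseteq[n]\}$, and $f\colon D\to L$ monotone and satisfying $$f(\widehat{\mathbf e}_{I\cup\{k\}})\wedge a_k\le f(\widehat{\mathbf e}_I)\le f(\widehat{\mathbf e}_{I\setminus\{k\}})\vee b_k\quad\text{for all } I\subseteq[n],\ k\in[n].$$ Then $p^+(\widehat{\mathbf e}_J)\le f(\widehat{\mathbf e}_J)$ for all $J\subseteq[n]$.
   Context: $B$ is the Boolean algebra generated by $L$ (with $L$ embedded), with complement $x\mapsto x'$. $f$ monotone means $I\subseteq J\Rightarrow f(\widehat{\mathbf e}_I)\le f(\widehat{\mathbf e}_J)$. Define $c_I^+=f(\widehat{\mathbf e}_I)\vee\bigvee_{i\in I}b_i'\in B$ and $p^+(\mathbf x)=\bigvee_{I\subseteq[n]}(c_I^+\wedge\bigwedge_{i\in I}x_i)$, a polynomial function over $B$. *)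

theory Defs
  imports Main
begin

inductive_set bool_gen :: "'a::boolean_algebra set \<Rightarrow> 'a set" for L where
  gen_base: "x \<in> L \<Longrightarrow> x \<in> bool_gen L"
| gen_bot: "bot \<in> bool_gen L"
| gen_top: "top \<in> bool_gen L"
| gen_sup: "x \<in> bool_gen L \<Longrightarrow> y \<in> bool_gen L \<Longrightarrow> sup x y \<in> bool_gen L"
| gen_inf: "x \<in> bool_gen L \<Longrightarrow> y \<in> bool_gen L \<Longrightarrow> inf x y \<in> bool_gen L"
| gen_compl: "x \<in> bool_gen L \<Longrightarrow> - x \<in> bool_gen L"

definition sublattice :: "'a::lattice set \<Rightarrow> bool" where
  "sublattice L \<longleftrightarrow> (\<forall>x\<in>L. \<forall>y\<in>L. sup x y \<in> L \<and> inf x y \<in> L)"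

definition Join :: "('i \<Rightarrow> 'a::bounded_lattice) \<Rightarrow> 'i set \<Rightarrow> 'a" where
  "Join g A = Sup_fin (insert bot (g ` A))"

definition Meet :: "('i \<Rightarrow> 'a::bounded_lattice) \<Rightarrow> 'i set \<Rightarrow> 'a" where
  "Meet g A = Inf_fin (insert top (g ` A))"

definition ehat :: "(nat \<Rightarrow> 'a) \<Rightarrow> (nat \<Rightarrow> 'a) \<Rightarrow> nat set \<Rightarrow> nat \<Rightarrow> 'a" where
  "ehat a b I = (\<lambda>i. if i \<in> I then b i else a i)"

definition cplus :: "(nat \<Rightarrow> 'a::boolean_algebra) \<Rightarrow> (nat \<Rightarrow> 'a) \<Rightarrow> ((nat \<Rightarrow> 'a) \<Rightarrow> 'a) \<Rightarrow> nat set \<Rightarrow> 'a" where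
  "cplus a b f I = sup (f (ehat a b I)) (Join (\<lambda>i. - b i) I)"

definition pplus :: "nat \<Rightarrow> (nat \<Rightarrow> 'a::boolean_algebra) \<Rightarrow> (nat \<Rightarrow> 'a) \<Rightarrow> ((nat \<Rightarrow> 'a) \<Rightarrow> 'a) \<Rightarrow> (nat \<Rightarrow> 'a) \<Rightarrow> 'a" where
  "pplus n a b f x = Join (\<lambda>I. inf (cplus a b f I) (Meet x I)) (Pow {1..n})"

end

theory Submission
  imports Defs
begin

lemma Join_le_iff:
  fixes g :: "'i \<Rightarrow> 'a::bounded_lattice"
  assumes "finite A" shows "Join g A \<le> y \<longleftrightarrow> (\<forall>x\<in>A. g x \<le> y)"
  unfolding Join_def using assms by (simp add: Sup_fin.bounded_iff)

lemma le_Meet_iff: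
  fixes g :: "'i \<Rightarrow> 'a::bounded_lattice"
  assumes "finite A" shows "y \<le> Meet g A \<longleftrightarrow> (\<forall>x\<in>A. y \<le> g x)"
  unfolding Meet_def using assms by (simp add: Inf_fin.bounded_iff)

lemma down_step:
  fixes f :: "(nat \<Rightarrow> 'a::boolean_algebra) \<Rightarrow> 'a"
  assumes fc: "\<forall>I k. I \<subseteq> {1..n} \<and> k \<in> {1..n} \<longrightarrow>
        inf (f (ehat a b (I \<union> {k}))) (a k) \<le> f (ehat a b I)"
  shows "finite S \<Longrightarrow> K \<union> S \<subseteq> {1..n} \<Longrightarrow> (\<forall>i\<in>S. y \<le> a i)
     \<Longrightarrow> inf (f (ehat a b (K \<union> S))) y \<le> f (ehat a b K)"
proof (induction S rule: finite_induct)
  case empty then show ?case by simp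
next
  case (insert k S)
  have k: "k \<in> {1..n}" and KS: "K \<union> S \<subseteq> {1..n}" using insert.prems by auto
  have eq: "K \<union> insert k S = (K \<union> S) \<union> {k}" by auto
  have "inf (f (ehat a b (K \<union> insert k S))) y
        \<le> inf (inf (f (ehat a b ((K \<union> S) \<union> {k}))) (a k)) y"
    using insert.prems eq by (simp add: le_infI2)
  also have "\<dots> \<le> inf (f (ehat a b (K \<union> S))) y"
    proof (rule inf_mono)
    show "inf (f (ehat a b ((K \<union> S) \<union> {k}))) (a k) \<le> f (ehat a b (K \<union> S))"
      using fc k KS by blast
  qed simp
  also have "\<dots> \<le> f (ehat a b K)" using insert.IH KS insert.prems by auto
  finally show ?case .
qed

theorem lemma3p3:
  fixes L :: "'a::boolean_algebra set"
    and n :: nat and a b :: "nat \<Rightarrow> 'a" and f :: "(nat \<Rightarrow> 'a) \<Rightarrow> 'a"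
  assumes L_lat: "sublattice L"
    and L_gen: "bool_gen L = UNIV"
    and n_pos: "n \<ge> 1"
    and a_L: "\<forall>i\<in>{1..n}. a i \<in> L" and b_L: "\<forall>i\<in>{1..n}. b i \<in> L"
    and ab: "\<forall>i\<in>{1..n}. a i < b i"
    and f_L: "\<forall>I. I \<subseteq> {1..n} \<longrightarrow> f (ehat a b I) \<in> L"
    and f_mono: "\<forall>I J. I \<subseteq> J \<and> J \<subseteq> {1..n} \<longrightarrow> f (ehat a b I) \<le> f (ehat a b J)"
    and f_cond: "\<forall>I k. I \<subseteq> {1..n} \<and> k \<in> {1..n} \<longrightarrow>
        inf (f (ehat a b (I \<union> {k}))) (a k) \<le> f (ehat a b I)
      \<and> f (ehat a b I) \<le> sup (f (ehat a b (I - {k}))) (b k)"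
  shows "\<forall>J. J \<subseteq> {1..n} \<longrightarrow> pplus n a b f (ehat a b J) \<le> f (ehat a b J)"
proof (intro allI impI)
  fix J assume J: "J \<subseteq> {1..n}"
  have fc: "\<forall>I k. I \<subseteq> {1..n} \<and> k \<in> {1..n} \<longrightarrow>
        inf (f (ehat a b (I \<union> {k}))) (a k) \<le> f (ehat a b I)" using f_cond by blast
  have fin: "finite (Pow {1..n::nat})" by simp
  show "pplus n a b f (ehat a b J) \<le> f (ehat a b J)"
    unfolding pplus_def
  proof (subst Join_le_iff[OF fin], intro ballI)
    fix I assume "I \<in> Pow {1..n}"
    hence I: "I \<subseteq> {1..n}" by auto
    have finI: "finite I" using I finite_subset by blast
    define M where "M = Meet (ehat a b J) I"
    have Mle: "\<forall>i\<in>I. M \<le> ehat a b J i"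
      using le_Meet_iff[OF finI] unfolding M_def by blast
    have Mb: "\<forall>i\<in>I. M \<le> b i"
    proof
      fix i assume i: "i \<in> I"
      have "ehat a b J i \<le> b i" using ab I i unfolding ehat_def by (auto simp: less_imp_le)
      thus "M \<le> b i" using Mle i by (meson order_trans)
    qed
    have "Join (\<lambda>i. - b i) I \<le> - M"
      using Mb by (simp add: Join_le_iff[OF finI] compl_mono)
    hence Jbot: "inf (Join (\<lambda>i. - b i) I) M = bot"
      proof -
      have "inf (Join (\<lambda>i. - b i) I) M \<le> inf (- M) M"
        using \<open>Join (\<lambda>i. - b i) I \<le> - M\<close> by (rule inf_mono) simp
      thus ?thesis by (simp add: bot_unique)
    qed
    have Ma: "\<forall>i\<in>I - J. M \<le> a i"
      using Mle unfolding ehat_def by auto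
    have eqI: "(I \<inter> J) \<union> (I - J) = I" by auto
    have "inf (f (ehat a b I)) M \<le> f (ehat a b (I \<inter> J))"
      using down_step[OF fc, of "I - J" "I \<inter> J" M] finI I Ma eqI by auto
    also have "\<dots> \<le> f (ehat a b J)" using f_mono J by auto
    finally have key: "inf (f (ehat a b I)) M \<le> f (ehat a b J)" .
    have "inf (cplus a b f I) M = sup (inf (f (ehat a b I)) M) (inf (Join (\<lambda>i. - b i) I) M)"
      unfolding cplus_def by (simp add: inf_sup_distrib2)
    also have "\<dots> = inf (f (ehat a b I)) M" using Jbot by simp
    finally show "inf (cplus a b f I) (Meet (ehat a b J) I) \<le> f (ehat a b J)"
      using key M_def by simp
  qed
qed

end
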